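(* Consider an instance of the rental-harmony problem with $k$ roommates and $k-1$ rooms (satisfying the assumptions in the context). Then there exists a division of the rent such that, no matter which one roommate is kicked out, there is an envy-free assignment of the $k-1$ rooms to the remaining $k-1$ roommates, i.e., a bijection between rooms and remaining roommates in which each roommate receives one of her preferred rooms for that rent division.
   Context: A fixed total rent is to be divided among the rooms: a rent division is an assignment of a nonnegative price to each room, the prices summing to the total rent. For each rent division, each roommate has a nonempty set of preferred rooms (she may prefer several). Assumptions: (i) a roommate will not envy the others if she gets a room for free, i.e., in any rent division, any room whose price is zero is among the preferred rooms of each roommate; (ii) closedness: if a roommate prefers a given room for every rent division of a converging sequence of rent divisions, she also prefers that room for the limit rent division. An assignment of rooms to roommates is envy-free if each roommate receives one of her preferred rooms. *)

theory Defs
  imports "HOL-Analysis.Analysis"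
begin

text \<open>A rent division of total rent R is a price vector
  p :: nat => real, nonnegative on the rooms, summing to R over the rooms, and
  (by convention, so that it is a genuine n-dimensional object) zero outside the rooms.\<close>
definition rent_division :: "nat \<Rightarrow> real \<Rightarrow> (nat \<Rightarrow> real) \<Rightarrow> bool" where
  "rent_division n R p \<longleftrightarrow>
     (\<forall>j<n. 0 \<le> p j) \<and> (\<forall>j. n \<le> j \<longrightarrow> p j = 0) \<and> (\<Sum>j<n. p j) = R"

definition envy_free_assignment ::
  "(nat \<Rightarrow> (nat \<Rightarrow> real) \<Rightarrow> nat set) \<Rightarrow> (nat \<Rightarrow> real) \<Rightarrow> nat set \<Rightarrow> nat \<Rightarrow> (nat \<Rightarrow> nat) \<Rightarrow> bool" where
  "envy_free_assignment pref p M n \<sigma> \<longleftrightarrow>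
     bij_betw \<sigma> M {..<n} \<and> (\<forall>i\<in>M. \<sigma> i \<in> pref i p)"

end

theory Submission
  imports Defs
begin

lemma bw_fin:
  fixes X :: "nat \<Rightarrow> 'a \<Rightarrow> real"
  assumes "finite K" and "\<And>m a. a \<in> K \<Longrightarrow> \<bar>X m a\<bar> \<le> B"
  shows "\<exists>\<phi>. strict_mono \<phi> \<and> (\<forall>a\<in>K. convergent (\<lambda>m. X (\<phi> m) a))"
  using assms
proof (induction K rule: finite_induct)
  case empty
  have "strict_mono (id::nat\<Rightarrow>nat)" by (simp add: strict_mono_def)
  then show ?case by blast
next
  case (insert a K)
  then obtain \<phi> where \<phi>: "strict_mono \<phi>" "\<forall>b\<in>K. convergent (\<lambda>m. X (\<phi> m) b)" by auto
  obtain \<psi> :: "nat \<Rightarrow> nat" where \<psi>: "strict_mono \<psi>" "monoseq (\<lambda>m. X (\<phi> (\<psi> m)) a)"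
    using seq_monosub[of "\<lambda>m. X (\<phi> m) a"] by auto
  have "Bseq (\<lambda>m. X (\<phi> (\<psi> m)) a)"
  proof (rule BseqI')
    fix m show "norm (X (\<phi> (\<psi> m)) a) \<le> B" using insert.prems[of a] by simp
  qed
  then have ca: "convergent (\<lambda>m. X (\<phi> (\<psi> m)) a)"
    using \<psi>(2) Bseq_monoseq_convergent by blast
  have cb: "convergent (\<lambda>m. X (\<phi> (\<psi> m)) b)" if "b \<in> K" for b
  proof -
    have "convergent ((\<lambda>m. X (\<phi> m) b) \<circ> \<psi>)"
      using \<phi>(2) that \<psi>(1) convergent_subseq_convergent by blast
    then show ?thesis by (simp add: o_def)
  qed
  have sm: "strict_mono (\<phi> \<circ> \<psi>)" using \<phi>(1) \<psi>(1) by (rule strict_mono_o)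
  have "\<forall>b\<in>insert a K. convergent (\<lambda>m. X ((\<phi> \<circ> \<psi>) m) b)"
    using ca cb by auto
  with sm show ?case by blast
qed

lemma bw_fin_lim:
  fixes X :: "nat \<Rightarrow> 'a \<Rightarrow> real"
  assumes "finite K" and "\<And>m a. a \<in> K \<Longrightarrow> \<bar>X m a\<bar> \<le> B"
  obtains \<phi> L where "strict_mono \<phi>" "\<And>a. a \<in> K \<Longrightarrow> (\<lambda>m. X (\<phi> m) a) \<longlonglongrightarrow> L a"
proof -
  obtain \<phi> where "strict_mono \<phi>" "\<forall>a\<in>K. convergent (\<lambda>m. X (\<phi> m) a)"
    using bw_fin[of K X B] assms by auto
  then show ?thesis
    using that[of \<phi> "\<lambda>a. lim (\<lambda>m. X (\<phi> m) a)"] by (simp add: convergent_LIMSEQ_iff)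
qed

definition cube :: "nat \<Rightarrow> (nat \<Rightarrow> real) set" where
  "cube n = {x. (\<forall>i<n. 0 \<le> x i \<and> x i \<le> 1) \<and> (\<forall>i. n \<le> i \<longrightarrow> x i = 0)}"

definition grid :: "nat \<Rightarrow> nat \<Rightarrow> (nat \<Rightarrow> nat) \<Rightarrow> nat \<Rightarrow> real" where
  "grid n p x = (\<lambda>i. if i < n then real (x i) / real p else 0)"

lemma grid_cube:
  assumes "p > 0" "\<forall>i<n. x i \<le> p"
  shows "grid n p x \<in> cube n"
  using assms by (auto simp: cube_def grid_def divide_le_eq_1)

lemma kuhn_step:
  fixes G :: "(nat \<Rightarrow> real) \<Rightarrow> nat \<Rightarrow> real"
  assumes maps: "\<And>x. x \<in> cube n \<Longrightarrow> G x \<in> cube n" and p: "0 < p"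
  shows "\<exists>q. (\<forall>i<n. q i < p) \<and> (\<forall>i<n. \<exists>r s. (\<forall>j<n. q j \<le> r j \<and> r j \<le> q j + 1) \<and>
     (\<forall>j<n. q j \<le> s j \<and> s j \<le> q j + 1) \<and>
     grid n p r i \<le> G (grid n p r) i \<and> G (grid n p s) i \<le> grid n p s i)"
proof -
  define lab where "lab = (\<lambda>y i. if y i = 0 \<or> y i < G y i then (0::nat) else 1)"
  define label where "label = (\<lambda>x i. lab (grid n p x) i)"
  have l0: "y i \<le> G y i" if "y \<in> cube n" "i < n" "lab y i = 0" for y i
  proof -
    have "0 \<le> G y i" using maps[OF that(1)] that(2) by (simp add: cube_def)
    then show ?thesis using that(3) by (auto simp: lab_def split: if_splits)
  qed
  have l1: "G y i \<le> y i" if "lab y i = 1" for y i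
    using that by (auto simp: lab_def split: if_splits)
  have h1: "\<forall>x. (\<forall>i<n. x i \<le> p) \<longrightarrow> (\<forall>i<n. label x i = (0::nat) \<or> label x i = 1)"
    by (simp add: label_def lab_def)
  have h2: "\<forall>x. (\<forall>i<n. x i \<le> p) \<longrightarrow> (\<forall>i<n. x i = 0 \<longrightarrow> label x i = 0)"
    by (simp add: label_def lab_def grid_def)
  have h3: "\<forall>x. (\<forall>i<n. x i \<le> p) \<longrightarrow> (\<forall>i<n. x i = p \<longrightarrow> label x i = 1)"
  proof (intro allI impI)
    fix x i assume x: "\<forall>i<n. x i \<le> p" and i: "i < n" and xi: "x i = p"
    have gi: "grid n p x i = 1" using i xi p by (simp add: grid_def)
    have "G (grid n p x) i \<le> 1" using maps[OF grid_cube[OF p x]] i by (simp add: cube_def)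
    then show "label x i = 1" using gi by (simp add: label_def lab_def)
  qed
  obtain q where q1: "\<forall>i<n. q i < p"
    and q2: "\<forall>i<n. \<exists>r s. (\<forall>j<n. q j \<le> r j \<and> r j \<le> q j + 1) \<and> (\<forall>j<n. q j \<le> s j \<and> s j \<le> q j + 1) \<and> label r i \<noteq> label s i"
    using kuhn_lemma[OF p h1 h2 h3] by blast
  have "\<exists>r s. (\<forall>j<n. q j \<le> r j \<and> r j \<le> q j + 1) \<and>
     (\<forall>j<n. q j \<le> s j \<and> s j \<le> q j + 1) \<and>
     grid n p r i \<le> G (grid n p r) i \<and> G (grid n p s) i \<le> grid n p s i" if i: "i < n" for i
  proof -
    obtain r s where r: "\<forall>j<n. q j \<le> r j \<and> r j \<le> q j + 1" and s: "\<forall>j<n. q j \<le> s j \<and> s j \<le> q j + 1"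
      and ne: "label r i \<noteq> label s i"
      using q2 i by blast
    have rc: "grid n p r \<in> cube n"
      by (rule grid_cube[OF p]) (use r q1 in fastforce)
    have sc: "grid n p s \<in> cube n"
      by (rule grid_cube[OF p]) (use s q1 in fastforce)
    have lr: "label r i = 0 \<or> label r i = 1" and ls: "label s i = 0 \<or> label s i = 1"
      by (simp_all add: label_def lab_def)
    show ?thesis
    proof (cases "label r i = 0")
      case True
      then have "label s i = 1" using ne ls by simp
      then show ?thesis using l0[OF rc i] l1 True r s unfolding label_def by blast
    next
      case False
      then have "label r i = 1" "label s i = 0" using ne ls lr by auto
      then show ?thesis using l0[OF sc i] l1 r s unfolding label_def by blast
    qed
  qed
  then show ?thesis using q1 by blast
qed

lemma choice2:
  assumes "\<And>m i. i < n \<Longrightarrow> \<exists>r. P m i r"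
  shows "\<exists>f. \<forall>m i. i < n \<longrightarrow> P m i (f m i)"
proof (intro exI[of _ "\<lambda>m i. SOME r. P m i r"] allI impI)
  fix m i assume "i < n"
  then show "P m i (SOME r. P m i r)" using assms by (blast intro: someI_ex)
qed

lemma brouwer_cube_nat:
  fixes G :: "(nat \<Rightarrow> real) \<Rightarrow> nat \<Rightarrow> real"
  assumes maps: "\<And>x. x \<in> cube n \<Longrightarrow> G x \<in> cube n"
    and cont: "\<And>xs x l. (\<And>m. xs m \<in> cube n) \<Longrightarrow> x \<in> cube n \<Longrightarrow>
                 (\<And>l. (\<lambda>m. xs m l) \<longlonglongrightarrow> x l) \<Longrightarrow> (\<lambda>m. G (xs m) l) \<longlonglongrightarrow> G x l"
  shows "\<exists>x\<in>cube n. G x = x"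
proof -
  have "\<forall>m. \<exists>q. (\<forall>i<n. q i < Suc m) \<and> (\<forall>i<n. \<exists>r s. (\<forall>j<n. q j \<le> r j \<and> r j \<le> q j + 1) \<and>
     (\<forall>j<n. q j \<le> s j \<and> s j \<le> q j + 1) \<and>
     grid n (Suc m) r i \<le> G (grid n (Suc m) r) i \<and> G (grid n (Suc m) s) i \<le> grid n (Suc m) s i)"
    by (intro allI kuhn_step maps) simp_all
  then obtain Q where Q1: "\<And>m i. i < n \<Longrightarrow> Q m i < Suc m"
    and Q2: "\<And>m i. i < n \<Longrightarrow> \<exists>r s. (\<forall>j<n. Q m j \<le> r j \<and> r j \<le> Q m j + 1) \<and>
     (\<forall>j<n. Q m j \<le> s j \<and> s j \<le> Q m j + 1) \<and>
     grid n (Suc m) r i \<le> G (grid n (Suc m) r) i \<and> G (grid n (Suc m) s) i \<le> grid n (Suc m) s i"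
    by metis
  obtain Rf where Rf: "\<And>m i. i < n \<Longrightarrow> \<exists>s. (\<forall>j<n. Q m j \<le> Rf m i j \<and> Rf m i j \<le> Q m j + 1) \<and>
     (\<forall>j<n. Q m j \<le> s j \<and> s j \<le> Q m j + 1) \<and>
     grid n (Suc m) (Rf m i) i \<le> G (grid n (Suc m) (Rf m i)) i \<and> G (grid n (Suc m) s) i \<le> grid n (Suc m) s i"
    using choice2[of n "\<lambda>m i r. \<exists>s. (\<forall>j<n. Q m j \<le> r j \<and> r j \<le> Q m j + 1) \<and>
     (\<forall>j<n. Q m j \<le> s j \<and> s j \<le> Q m j + 1) \<and>
     grid n (Suc m) r i \<le> G (grid n (Suc m) r) i \<and> G (grid n (Suc m) s) i \<le> grid n (Suc m) s i", OF Q2] by blast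
  obtain Sf where RS: "\<And>m i. i < n \<Longrightarrow> (\<forall>j<n. Q m j \<le> Rf m i j \<and> Rf m i j \<le> Q m j + 1) \<and>
     (\<forall>j<n. Q m j \<le> Sf m i j \<and> Sf m i j \<le> Q m j + 1) \<and>
     grid n (Suc m) (Rf m i) i \<le> G (grid n (Suc m) (Rf m i)) i \<and> G (grid n (Suc m) (Sf m i)) i \<le> grid n (Suc m) (Sf m i) i"
    using choice2[of n "\<lambda>m i s. (\<forall>j<n. Q m j \<le> Rf m i j \<and> Rf m i j \<le> Q m j + 1) \<and>
     (\<forall>j<n. Q m j \<le> s j \<and> s j \<le> Q m j + 1) \<and>
     grid n (Suc m) (Rf m i) i \<le> G (grid n (Suc m) (Rf m i)) i \<and> G (grid n (Suc m) s) i \<le> grid n (Suc m) s i", OF Rf] by blast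
  define X where "X = (\<lambda>m. grid n (Suc m) (Q m))"
  have Xc: "X m \<in> cube n" for m
    unfolding X_def by (rule grid_cube) (simp, use Q1 less_imp_le in blast)
  have Xb: "\<bar>X m a\<bar> \<le> 1" if "a \<in> {..<n}" for m a
    using Xc[of m] that by (auto simp: cube_def)
  obtain \<phi> L where \<phi>: "strict_mono \<phi>" and L: "\<And>a. a \<in> {..<n} \<Longrightarrow> (\<lambda>m. X (\<phi> m) a) \<longlonglongrightarrow> L a"
    using bw_fin_lim[of "{..<n}" X 1] Xb by blast
  define x where "x = (\<lambda>l. if l < n then L l else 0)"
  have Xx: "(\<lambda>m. X (\<phi> m) l) \<longlonglongrightarrow> x l" for l
  proof (cases "l < n")
    case True then show ?thesis using L[of l] by (simp add: x_def)
  next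
    case False
    then have "X (\<phi> m) l = 0" for m using Xc[of "\<phi> m"] by (simp add: cube_def)
    then show ?thesis using False by (simp add: x_def)
  qed
  have xc: "x \<in> cube n"
  proof -
    have "0 \<le> x l \<and> x l \<le> 1" if "l < n" for l
    proof -
      have "\<forall>m. 0 \<le> X (\<phi> m) l \<and> X (\<phi> m) l \<le> 1" using Xc that by (auto simp: cube_def)
      then show ?thesis
        using LIMSEQ_le_const[OF Xx[of l]] LIMSEQ_le_const2[OF Xx[of l]] by blast
    qed
    then show ?thesis by (auto simp: cube_def x_def)
  qed
  have inv: "(\<lambda>m. inverse (real (Suc (\<phi> m)))) \<longlonglongrightarrow> 0"
  proof (rule Lim_null_comparison)
    show "(\<lambda>m. inverse (real (Suc m))) \<longlonglongrightarrow> 0" by (rule LIMSEQ_inverse_real_of_nat)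
    have "m \<le> \<phi> m" for m using seq_suble[OF \<phi>] by blast
    then show "\<forall>\<^sub>F m in sequentially. norm (inverse (real (Suc (\<phi> m)))) \<le> inverse (real (Suc m))"
      by (auto simp: field_simps)
  qed
  have near: "(\<lambda>m. grid n (Suc (\<phi> m)) (F m) l) \<longlonglongrightarrow> x l"
    if F: "\<And>m j. j < n \<Longrightarrow> Q (\<phi> m) j \<le> F m j \<and> F m j \<le> Q (\<phi> m) j + 1" for F l
  proof (cases "l < n")
    case True
    have "(\<lambda>m. grid n (Suc (\<phi> m)) (F m) l - X (\<phi> m) l) \<longlonglongrightarrow> 0"
    proof (rule Lim_null_comparison[OF _ inv])
      show "\<forall>\<^sub>F m in sequentially. norm (grid n (Suc (\<phi> m)) (F m) l - X (\<phi> m) l) \<le> inverse (real (Suc (\<phi> m)))"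
      proof (intro always_eventually allI)
        fix m
        have e: "grid n (Suc (\<phi> m)) (F m) l - X (\<phi> m) l = (real (F m l) - real (Q (\<phi> m) l)) / real (Suc (\<phi> m))"
          using True by (simp add: X_def grid_def diff_divide_distrib)
        have "0 \<le> real (F m l) - real (Q (\<phi> m) l)" "real (F m l) - real (Q (\<phi> m) l) \<le> 1"
          using F[OF True, of m] by auto
        then have a: "\<bar>real (F m l) - real (Q (\<phi> m) l)\<bar> \<le> 1" by simp
        have "\<bar>real (F m l) - real (Q (\<phi> m) l)\<bar> * inverse (real (Suc (\<phi> m))) \<le> 1 * inverse (real (Suc (\<phi> m)))"
          by (rule mult_right_mono[OF a]) simp
        then show "norm (grid n (Suc (\<phi> m)) (F m) l - X (\<phi> m) l) \<le> inverse (real (Suc (\<phi> m)))"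
          unfolding e by (simp add: divide_inverse abs_mult)
      qed
    qed
    from tendsto_add[OF this Xx[of l]] show ?thesis by simp
  next
    case False then show ?thesis by (simp add: grid_def x_def)
  qed
  have "G x i = x i" if i: "i < n" for i
  proof -
    have gr: "grid n (Suc (\<phi> m)) (Rf (\<phi> m) i) \<in> cube n" "grid n (Suc (\<phi> m)) (Sf (\<phi> m) i) \<in> cube n" for m
    proof -
      have "Rf (\<phi> m) i j \<le> Suc (\<phi> m) \<and> Sf (\<phi> m) i j \<le> Suc (\<phi> m)" if j: "j < n" for j
      proof -
        have "Q (\<phi> m) j < Suc (\<phi> m)" using Q1[OF j] .
        moreover have "Rf (\<phi> m) i j \<le> Q (\<phi> m) j + 1" "Sf (\<phi> m) i j \<le> Q (\<phi> m) j + 1"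
          using RS[OF i, of "\<phi> m"] j by blast+
        ultimately show ?thesis by linarith
      qed
      then show "grid n (Suc (\<phi> m)) (Rf (\<phi> m) i) \<in> cube n" "grid n (Suc (\<phi> m)) (Sf (\<phi> m) i) \<in> cube n"
        by (simp_all add: grid_cube)
    qed
    have cr: "(\<lambda>m. grid n (Suc (\<phi> m)) (Rf (\<phi> m) i) l) \<longlonglongrightarrow> x l" for l
      by (rule near) (use RS[OF i] in blast)
    have cs: "(\<lambda>m. grid n (Suc (\<phi> m)) (Sf (\<phi> m) i) l) \<longlonglongrightarrow> x l" for l
      by (rule near) (use RS[OF i] in blast)
    have Gr: "(\<lambda>m. G (grid n (Suc (\<phi> m)) (Rf (\<phi> m) i)) i) \<longlonglongrightarrow> G x i"
      by (rule cont[OF gr(1) xc cr])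
    have Gs: "(\<lambda>m. G (grid n (Suc (\<phi> m)) (Sf (\<phi> m) i)) i) \<longlonglongrightarrow> G x i"
      by (rule cont[OF gr(2) xc cs])
    have "x i \<le> G x i"
      by (rule LIMSEQ_le[OF cr Gr]) (use RS[OF i] in blast)
    moreover have "G x i \<le> x i"
      by (rule LIMSEQ_le[OF Gs cs]) (use RS[OF i] in blast)
    ultimately show ?thesis by simp
  qed
  moreover have "G x i = x i" if "\<not> i < n" for i
    using maps[OF xc] xc that by (simp add: cube_def)
  ultimately have "G x = x" by (intro ext) blast
  with xc show ?thesis by blast
qed

definition simp1 :: "nat \<Rightarrow> (nat \<Rightarrow> real) set" where
  "simp1 n = {p. (\<forall>i<n. 0 \<le> p i) \<and> (\<forall>i. n \<le> i \<longrightarrow> p i = 0) \<and> (\<Sum>i<n. p i) = 1}"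

lemma simp1_le1: "p \<in> simp1 n \<Longrightarrow> i < n \<Longrightarrow> p i \<le> 1"
proof -
  assume p: "p \<in> simp1 n" and i: "i < n"
  have "p i \<le> (\<Sum>j<n. p j)"
    by (rule member_le_sum) (use p i in \<open>auto simp: simp1_def\<close>)
  then show ?thesis using p by (simp add: simp1_def)
qed

lemma simp1_cube: "simp1 n \<subseteq> cube n"
  using simp1_le1 by (fastforce simp: simp1_def cube_def)

definition rho :: "nat \<Rightarrow> (nat \<Rightarrow> real) \<Rightarrow> nat \<Rightarrow> real" where
  "rho n y = (\<lambda>l. if l < n then (y l + max 0 (1 - (\<Sum>j<n. y j))) /
       ((\<Sum>j<n. y j) + real n * max 0 (1 - (\<Sum>j<n. y j))) else 0)"

lemma rho_den: "n \<ge> 1 \<Longrightarrow> 1 \<le> (s::real) + real n * max 0 (1 - s)"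
proof -
  assume n: "n \<ge> 1"
  show ?thesis
  proof (cases "s \<ge> 1")
    case True then show ?thesis by simp
  next
    case False
    have "1 * (1 - s) \<le> real n * (1 - s)" using n False by (intro mult_right_mono) auto
    then have "1 \<le> s + real n * (1 - s)" by (simp add: algebra_simps)
    moreover have "max 0 (1 - s) = 1 - s" using False by simp
    ultimately show ?thesis by simp
  qed
qed

lemma rho_simp1:
  assumes n: "n \<ge> 1" and y: "y \<in> cube n"
  shows "rho n y \<in> simp1 n"
proof -
  define s where "s = (\<Sum>j<n. y j)"
  define a where "a = max 0 (1 - s)"
  have D: "1 \<le> s + real n * a" unfolding a_def by (rule rho_den[OF n])
  have nn: "0 \<le> rho n y i" for i
    using y D by (auto simp: rho_def cube_def s_def a_def)
  have "(\<Sum>i<n. rho n y i) = (\<Sum>i<n. (y i + a) / (s + real n * a))"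
    by (simp add: rho_def s_def a_def)
  also have "\<dots> = (\<Sum>i<n. (y i + a)) / (s + real n * a)"
    by (simp add: sum_divide_distrib)
  also have "(\<Sum>i<n. (y i + a)) = s + real n * a"
    by (simp add: sum.distrib s_def)
  finally have "(\<Sum>i<n. rho n y i) = 1" using D by simp
  moreover have "\<forall>i<n. 0 \<le> rho n y i" using nn by blast
  ultimately show ?thesis unfolding simp1_def by (simp add: rho_def)
qed

lemma rho_id:
  assumes "p \<in> simp1 n"
  shows "rho n p = p"
  using assms by (auto simp: rho_def simp1_def)

lemma rho_cont:
  assumes n: "n \<ge> 1" and ys: "\<And>l. (\<lambda>m. ys m l) \<longlonglongrightarrow> y l"
  shows "(\<lambda>m. rho n (ys m) l) \<longlonglongrightarrow> rho n y l"
proof (cases "l < n")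
  case True
  have D: "(\<Sum>j<n. y j) + real n * max 0 (1 - (\<Sum>j<n. y j)) \<noteq> 0"
    using rho_den[OF n, of "\<Sum>j<n. y j"] by linarith
  have "(\<lambda>m. (ys m l + max 0 (1 - (\<Sum>j<n. ys m j))) /
       ((\<Sum>j<n. ys m j) + real n * max 0 (1 - (\<Sum>j<n. ys m j)))) \<longlonglongrightarrow>
     (y l + max 0 (1 - (\<Sum>j<n. y j))) / ((\<Sum>j<n. y j) + real n * max 0 (1 - (\<Sum>j<n. y j)))"
    by (intro tendsto_divide D tendsto_add tendsto_mult tendsto_max tendsto_diff tendsto_sum ys tendsto_const)
  then show ?thesis using True by (simp add: rho_def)
next
  case False
  then show ?thesis by (simp add: rho_def)
qed

lemma brouwer_simplex:
  fixes F :: "(nat \<Rightarrow> real) \<Rightarrow> nat \<Rightarrow> real"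
  assumes n: "n \<ge> 1"
    and maps: "\<And>p. p \<in> simp1 n \<Longrightarrow> F p \<in> simp1 n"
    and cont: "\<And>ps p l. (\<And>m. ps m \<in> simp1 n) \<Longrightarrow> p \<in> simp1 n \<Longrightarrow>
                 (\<And>l. (\<lambda>m. ps m l) \<longlonglongrightarrow> p l) \<Longrightarrow> (\<lambda>m. F (ps m) l) \<longlonglongrightarrow> F p l"
  shows "\<exists>p\<in>simp1 n. F p = p"
proof -
  have "\<exists>y\<in>cube n. F (rho n y) = y"
  proof (rule brouwer_cube_nat)
    fix y assume "y \<in> cube n"
    then show "F (rho n y) \<in> cube n"
      using maps rho_simp1[OF n] simp1_cube by blast
  next
    fix ys y l
    assume ys: "\<And>m. ys m \<in> cube n" and y: "y \<in> cube n" and c: "\<And>l. (\<lambda>m. ys m l) \<longlonglongrightarrow> y l"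
    show "(\<lambda>m. F (rho n (ys m)) l) \<longlonglongrightarrow> F (rho n y) l"
      by (rule cont) (use rho_simp1[OF n] ys y rho_cont[OF n c] in auto)
  qed
  then obtain y where y: "y \<in> cube n" "F (rho n y) = y" by blast
  then have "y \<in> simp1 n" using maps rho_simp1[OF n] by metis
  then show ?thesis using y rho_id by metis
qed

definition d1 :: "nat \<Rightarrow> (nat \<Rightarrow> real) \<Rightarrow> (nat \<Rightarrow> real) \<Rightarrow> real" where
  "d1 n p q = (\<Sum>l<n. \<bar>p l - q l\<bar>)"

lemma d1_nonneg: "0 \<le> d1 n p q" by (simp add: d1_def sum_nonneg)
lemma d1_self: "d1 n p p = 0" by (simp add: d1_def)
lemma d1_sym: "d1 n p q = d1 n q p" by (simp add: d1_def abs_minus_commute)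
lemma d1_tri: "d1 n p r \<le> d1 n p q + d1 n q r"
proof -
  have "(\<Sum>l<n. \<bar>p l - r l\<bar>) \<le> (\<Sum>l<n. \<bar>p l - q l\<bar> + \<bar>q l - r l\<bar>)"
    by (rule sum_mono) linarith
  then show ?thesis by (simp add: d1_def sum.distrib)
qed
lemma d1_coord: "l < n \<Longrightarrow> \<bar>p l - q l\<bar> \<le> d1 n p q"
  unfolding d1_def by (rule member_le_sum) auto

lemma d1_tendsto:
  assumes "\<And>l. (\<lambda>m. ps m l) \<longlonglongrightarrow> p l"
  shows "(\<lambda>m. d1 n (ps m) p) \<longlonglongrightarrow> 0"
proof -
  have "(\<lambda>m. \<Sum>l<n. \<bar>ps m l - p l\<bar>) \<longlonglongrightarrow> (\<Sum>l<n. \<bar>p l - p l\<bar>)"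
    by (intro tendsto_sum tendsto_rabs tendsto_diff assms tendsto_const)
  then show ?thesis by (simp add: d1_def)
qed

definition dC :: "nat \<Rightarrow> (nat \<Rightarrow> real) set \<Rightarrow> (nat \<Rightarrow> real) \<Rightarrow> real" where
  "dC n C p = Inf (insert 1 ((\<lambda>q. d1 n p q) ` C))"

lemma dC_bdd: "bdd_below (insert 1 ((\<lambda>q. d1 n p q) ` C))"
  by (rule bdd_belowI[of _ 0]) (auto simp: d1_nonneg)

lemma dC_nonneg: "0 \<le> dC n C p"
  unfolding dC_def by (rule cInf_greatest) (auto simp: d1_nonneg)

lemma dC_le1: "dC n C p \<le> 1"
  unfolding dC_def by (rule cInf_lower[OF _ dC_bdd]) simp

lemma dC_le: "q \<in> C \<Longrightarrow> dC n C p \<le> d1 n p q"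
  unfolding dC_def by (rule cInf_lower[OF _ dC_bdd]) simp

lemma dC_zero: "p \<in> C \<Longrightarrow> dC n C p = 0"
  using dC_le[of p C n p] dC_nonneg[of n C p] by (simp add: d1_self)

lemma dC_lip: "dC n C p \<le> dC n C q + d1 n p q"
proof -
  have "dC n C p - d1 n p q \<le> dC n C q"
    unfolding dC_def[of n C q]
  proof (rule cInf_greatest)
    show "insert 1 ((\<lambda>r. d1 n q r) ` C) \<noteq> {}" by simp
  next
    fix x assume "x \<in> insert 1 ((\<lambda>r. d1 n q r) ` C)"
    then consider "x = 1" | r where "r \<in> C" "x = d1 n q r" by blast
    then show "dC n C p - d1 n p q \<le> x"
    proof cases
      case 1 then show ?thesis using dC_le1[of n C p] d1_nonneg[of n p q] by simp
    next
      case 2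
      then have "dC n C p \<le> d1 n p r" by (simp add: dC_le)
      also have "\<dots> \<le> d1 n p q + d1 n q r" by (rule d1_tri)
      finally show ?thesis using 2 by simp
    qed
  qed
  then show ?thesis by simp
qed

lemma dC_small:
  assumes "dC n C p < e" "e \<le> 1"
  shows "\<exists>q\<in>C. d1 n p q < e"
proof -
  have "\<exists>x\<in>insert 1 ((\<lambda>q. d1 n p q) ` C). x < e"
    using assms(1) unfolding dC_def by (subst (asm) cInf_less_iff[OF _ dC_bdd]) auto
  then show ?thesis using assms(2) by auto
qed

lemma dC_tendsto:
  assumes "\<And>l. (\<lambda>m. ps m l) \<longlonglongrightarrow> p l"
  shows "(\<lambda>m. dC n C (ps m)) \<longlonglongrightarrow> dC n C p"
proof -
  have "(\<lambda>m. dC n C (ps m) - dC n C p) \<longlonglongrightarrow> 0"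
  proof (rule Lim_null_comparison[OF _ d1_tendsto[OF assms]])
    show "\<forall>\<^sub>F m in sequentially. norm (dC n C (ps m) - dC n C p) \<le> d1 n (ps m) p"
    proof (intro always_eventually allI)
      fix m
      have "dC n C (ps m) \<le> dC n C p + d1 n (ps m) p" by (rule dC_lip)
      moreover have "dC n C p \<le> dC n C (ps m) + d1 n p (ps m)" by (rule dC_lip)
      ultimately show "norm (dC n C (ps m) - dC n C p) \<le> d1 n (ps m) p"
        by (simp add: d1_sym[of n p] abs_le_iff)
    qed
  qed
  then show ?thesis by (simp add: LIM_zero_iff)
qed

locale rh =
  fixes n :: nat and R :: real and pref :: "nat \<Rightarrow> (nat \<Rightarrow> real) \<Rightarrow> nat set"
  assumes n1: "1 \<le> n" and R0: "0 \<le> R"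
    and pref_rooms: "\<And>i p. i < Suc n \<Longrightarrow> rent_division n R p \<Longrightarrow> pref i p \<noteq> {} \<and> pref i p \<subseteq> {..<n}"
    and free_room: "\<And>i p j. i < Suc n \<Longrightarrow> rent_division n R p \<Longrightarrow> j < n \<Longrightarrow> p j = 0 \<Longrightarrow> j \<in> pref i p"
    and closed: "\<And>i j ps p. i < Suc n \<Longrightarrow> (\<forall>m. rent_division n R (ps m)) \<Longrightarrow>
                        rent_division n R p \<Longrightarrow> (\<forall>l. (\<lambda>m. ps m l) \<longlonglongrightarrow> p l) \<Longrightarrow>
                        (\<forall>m. j \<in> pref i (ps m)) \<Longrightarrow> j \<in> pref i p"
begin

definition sc :: "(nat \<Rightarrow> real) \<Rightarrow> nat \<Rightarrow> real" where "sc p = (\<lambda>l. R * p l)"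

lemma rd: "p \<in> simp1 n \<Longrightarrow> rent_division n R (sc p)"
  using R0 by (auto simp: rent_division_def simp1_def sc_def sum_distrib_left[symmetric])

definition Cs :: "nat \<Rightarrow> nat \<Rightarrow> (nat \<Rightarrow> real) set" where
  "Cs i j = {q \<in> simp1 n. j \<in> pref i (sc q)}"

definition w :: "real \<Rightarrow> nat \<Rightarrow> nat \<Rightarrow> (nat \<Rightarrow> real) \<Rightarrow> real" where
  "w e i j p = max 0 (e - dC n (Cs i j) p)"

definition WW :: "real \<Rightarrow> nat \<Rightarrow> (nat \<Rightarrow> real) \<Rightarrow> real" where
  "WW e i p = (\<Sum>l<n. w e i l p)"

definition xa :: "real \<Rightarrow> (nat \<Rightarrow> real) \<Rightarrow> nat \<Rightarrow> nat \<Rightarrow> real" where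
  "xa e p i j = w e i j p / WW e i p"

definition Dm :: "real \<Rightarrow> (nat \<Rightarrow> real) \<Rightarrow> nat \<Rightarrow> real" where
  "Dm e p j = (\<Sum>i<Suc n. xa e p i j)"

definition cc :: real where "cc = real (Suc n) / real n"

definition zz :: "real \<Rightarrow> (nat \<Rightarrow> real) \<Rightarrow> nat \<Rightarrow> real" where
  "zz e p j = Dm e p j - cc"

definition Fm :: "real \<Rightarrow> (nat \<Rightarrow> real) \<Rightarrow> nat \<Rightarrow> real" where
  "Fm e p = (\<lambda>l. if l < n then (p l + max 0 (zz e p l)) / (1 + (\<Sum>j<n. max 0 (zz e p j))) else 0)"

lemma w_nonneg: "0 \<le> w e i j p" by (simp add: w_def)
lemma w_le: "0 \<le> e \<Longrightarrow> w e i j p \<le> e" using dC_nonneg[of n "Cs i j" p] by (simp add: w_def)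
lemma w_in: "p \<in> Cs i j \<Longrightarrow> 0 \<le> e \<Longrightarrow> w e i j p = e" by (simp add: w_def dC_zero)
lemma w_pos: "0 < w e i j p \<Longrightarrow> dC n (Cs i j) p < e" by (simp add: w_def)

lemma pref_ex:
  assumes p: "p \<in> simp1 n" and i: "i < Suc n"
  obtains j where "j < n" "p \<in> Cs i j"
proof -
  have "pref i (sc p) \<noteq> {}" "pref i (sc p) \<subseteq> {..<n}" using pref_rooms[OF i rd[OF p]] by auto
  then obtain j where "j \<in> pref i (sc p)" "j < n" by blast
  then show ?thesis using that p by (auto simp: Cs_def)
qed

lemma free_Cs:
  assumes p: "p \<in> simp1 n" and i: "i < Suc n" and j: "j < n" and pj: "p j = 0"
  shows "p \<in> Cs i j"
  using free_room[OF i rd[OF p] j] pj p by (simp add: Cs_def sc_def)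

lemma WW_ge:
  assumes p: "p \<in> simp1 n" and i: "i < Suc n" and e: "0 \<le> e"
  shows "e \<le> WW e i p"
proof -
  obtain j where j: "j < n" "p \<in> Cs i j" using pref_ex[OF p i] by blast
  have "w e i j p \<le> WW e i p"
    unfolding WW_def by (rule member_le_sum) (use j w_nonneg in auto)
  then show ?thesis using w_in[OF j(2) e] by simp
qed

lemma WW_le: "0 \<le> e \<Longrightarrow> WW e i p \<le> real n * e"
proof -
  assume e: "0 \<le> e"
  have "WW e i p \<le> (\<Sum>l<n. e)" unfolding WW_def by (rule sum_mono) (rule w_le[OF e])
  then show ?thesis by simp
qed

lemma xa_nonneg: "0 \<le> xa e p i j"
  unfolding xa_def using w_nonneg[of e i j p] sum_nonneg[of "{..<n}" "\<lambda>l. w e i l p"] w_nonneg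
  by (simp add: WW_def)

lemma xa_le1:
  assumes p: "p \<in> simp1 n" and i: "i < Suc n" and e: "0 < e" and j: "j < n"
  shows "xa e p i j \<le> 1"
proof -
  have W: "e \<le> WW e i p" using WW_ge[OF p i] e by simp
  have "w e i j p \<le> WW e i p"
    unfolding WW_def by (rule member_le_sum) (use j w_nonneg in auto)
  then show ?thesis using W e by (simp add: xa_def divide_le_eq_1)
qed

lemma xa_row:
  assumes p: "p \<in> simp1 n" and i: "i < Suc n" and e: "0 < e"
  shows "(\<Sum>j<n. xa e p i j) = 1"
proof -
  have W: "e \<le> WW e i p" using WW_ge[OF p i] e by simp
  have "(\<Sum>j<n. xa e p i j) = (\<Sum>j<n. w e i j p) / WW e i p"
    by (simp add: xa_def sum_divide_distrib)
  then show ?thesis using W e by (simp add: WW_def)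
qed

lemma xa_free:
  assumes p: "p \<in> simp1 n" and i: "i < Suc n" and e: "0 < e" and j: "j < n" and pj: "p j = 0"
  shows "1 / real n \<le> xa e p i j"
proof -
  have wj: "w e i j p = e" using w_in[OF free_Cs[OF p i j pj]] e by simp
  have W: "e \<le> WW e i p" "WW e i p \<le> real n * e" using WW_ge[OF p i] WW_le e by auto
  have "e / (real n * e) \<le> e / WW e i p"
    using W e by (intro divide_left_mono) auto
  then show ?thesis using wj e n1 by (simp add: xa_def)
qed

lemma Dm_sum:
  assumes p: "p \<in> simp1 n" and e: "0 < e"
  shows "(\<Sum>j<n. Dm e p j) = real (Suc n)"
proof -
  have "(\<Sum>j<n. Dm e p j) = (\<Sum>i<Suc n. \<Sum>j<n. xa e p i j)"
    unfolding Dm_def by (rule sum.swap)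
  also have "\<dots> = (\<Sum>i<Suc n. 1)"
    by (rule sum.cong) (use xa_row[OF p _ e] in auto)
  finally show ?thesis by simp
qed

lemma zz_sum:
  assumes p: "p \<in> simp1 n" and e: "0 < e"
  shows "(\<Sum>j<n. zz e p j) = 0"
proof -
  have "(\<Sum>j<n. zz e p j) = (\<Sum>j<n. Dm e p j) - real n * cc"
    by (simp add: zz_def sum_subtractf)
  then show ?thesis using Dm_sum[OF p e] n1 by (simp add: cc_def)
qed

lemma zz_free:
  assumes p: "p \<in> simp1 n" and e: "0 < e" and j: "j < n" and pj: "p j = 0"
  shows "0 \<le> zz e p j"
proof -
  have "(\<Sum>i<Suc n. 1 / real n) \<le> Dm e p j"
    unfolding Dm_def by (rule sum_mono) (use xa_free[OF p _ e j pj] in auto)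
  then show ?thesis by (simp add: zz_def cc_def)
qed

lemma Fm_simp1:
  assumes p: "p \<in> simp1 n"
  shows "Fm e p \<in> simp1 n"
proof -
  define S where "S = (\<Sum>j<n. max 0 (zz e p j))"
  have S0: "0 \<le> S" unfolding S_def by (rule sum_nonneg) simp
  have nn: "\<forall>i<n. 0 \<le> Fm e p i" using p S0 by (auto simp: Fm_def simp1_def S_def)
  have "(\<Sum>i<n. Fm e p i) = (\<Sum>i<n. (p i + max 0 (zz e p i)) / (1 + S))"
    by (simp add: Fm_def S_def)
  also have "\<dots> = (\<Sum>i<n. (p i + max 0 (zz e p i))) / (1 + S)"
    by (simp add: sum_divide_distrib)
  also have "(\<Sum>i<n. (p i + max 0 (zz e p i))) = 1 + S"
    using p by (simp add: sum.distrib S_def simp1_def)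
  finally have "(\<Sum>i<n. Fm e p i) = 1" using S0 by simp
  then show ?thesis using nn by (simp add: simp1_def Fm_def)
qed

lemma Fm_cont:
  assumes e: "0 < e" and ps: "\<And>m. ps m \<in> simp1 n" and p: "p \<in> simp1 n"
    and c: "\<And>l. (\<lambda>m. ps m l) \<longlonglongrightarrow> p l"
  shows "(\<lambda>m. Fm e (ps m) l) \<longlonglongrightarrow> Fm e p l"
proof -
  have wc: "(\<lambda>m. w e i j (ps m)) \<longlonglongrightarrow> w e i j p" for i j
    unfolding w_def by (intro tendsto_max tendsto_diff tendsto_const dC_tendsto c)
  have Wc: "(\<lambda>m. WW e i (ps m)) \<longlonglongrightarrow> WW e i p" for i
    unfolding WW_def by (intro tendsto_sum wc)
  have xc: "(\<lambda>m. xa e (ps m) i j) \<longlonglongrightarrow> xa e p i j" if i: "i < Suc n" for i j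
  proof -
    have "e \<le> WW e i p" using WW_ge[OF p i, of e] e by simp
    then have "WW e i p \<noteq> 0" using e by linarith
    then show ?thesis unfolding xa_def by (intro tendsto_divide wc Wc)
  qed
  have zc: "(\<lambda>m. zz e (ps m) j) \<longlonglongrightarrow> zz e p j" for j
    unfolding zz_def Dm_def by (intro tendsto_diff tendsto_const tendsto_sum xc) simp
  show ?thesis
  proof (cases "l < n")
    case True
    have den: "1 + (\<Sum>j<n. max 0 (zz e p j)) \<noteq> 0"
      using sum_nonneg[of "{..<n}" "\<lambda>j. max 0 (zz e p j)"] by simp
    have "(\<lambda>m. (ps m l + max 0 (zz e (ps m) l)) / (1 + (\<Sum>j<n. max 0 (zz e (ps m) j))))
       \<longlonglongrightarrow> (p l + max 0 (zz e p l)) / (1 + (\<Sum>j<n. max 0 (zz e p j)))"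
      by (intro tendsto_divide den tendsto_add tendsto_max tendsto_const c zc tendsto_sum)
    then show ?thesis using True by (simp add: Fm_def)
  next
    case False then show ?thesis by (simp add: Fm_def)
  qed
qed

lemma equilibrium:
  assumes e: "0 < e"
  shows "\<exists>p\<in>simp1 n. \<forall>j<n. Dm e p j = cc"
proof -
  obtain p where p: "p \<in> simp1 n" and fp: "Fm e p = p"
    using brouwer_simplex[OF n1, of "Fm e"] Fm_simp1 Fm_cont[OF e] by blast
  define S where "S = (\<Sum>j<n. max 0 (zz e p j))"
  have S0: "0 \<le> S" unfolding S_def by (rule sum_nonneg) simp
  have eq: "p j * S = max 0 (zz e p j)" if j: "j < n" for j
  proof -
    have "p j = (p j + max 0 (zz e p j)) / (1 + S)"
      using fun_cong[OF fp, of j] j by (simp add: Fm_def S_def)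
    then have "p j * (1 + S) = p j + max 0 (zz e p j)" using S0
      by (simp add: field_simps)
    then show ?thesis by (simp add: algebra_simps)
  qed
  have S00: "S = 0"
  proof (rule ccontr)
    assume "S \<noteq> 0"
    then have Sp: "S > 0" using S0 by simp
    have zn: "0 \<le> zz e p j" if j: "j < n" for j
    proof (cases "p j = 0")
      case True then show ?thesis using zz_free[OF p e j] by simp
    next
      case False
      then have "p j > 0" using p j by (auto simp: simp1_def order_less_le)
      then have "0 < p j * S" using Sp by simp
      then have "0 < max 0 (zz e p j)" using eq[OF j] by simp
      then show ?thesis by simp
    qed
    then have "\<forall>j\<in>{..<n}. zz e p j = 0"
      using sum_nonneg_eq_0_iff[of "{..<n}" "zz e p"] zz_sum[OF p e] by auto
    then have "S = 0" unfolding S_def by simp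
    with Sp show False by simp
  qed
  have zl: "zz e p j \<le> 0" if j: "j < n" for j
  proof -
    have "max 0 (zz e p j) = 0"
      using sum_nonneg_eq_0_iff[of "{..<n}" "\<lambda>j. max 0 (zz e p j)"] S00 j by (simp add: S_def)
    then show ?thesis by simp
  qed
  have "\<forall>j\<in>{..<n}. - zz e p j = 0"
    using sum_nonneg_eq_0_iff[of "{..<n}" "\<lambda>j. - zz e p j"] zz_sum[OF p e] zl
    by (simp add: sum_negf)
  then have "\<forall>j<n. Dm e p j = cc" by (simp add: zz_def)
  with p show ?thesis by blast
qed

end

context rh begin

lemma limit_eq:
  "\<exists>p X. p \<in> simp1 n \<and> (\<forall>i j. 0 \<le> X i j) \<and> (\<forall>i<Suc n. (\<Sum>j<n. X i j) = 1) \<and>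
     (\<forall>j<n. (\<Sum>i<Suc n. X i j) = cc) \<and> (\<forall>i<Suc n. \<forall>j<n. 0 < X i j \<longrightarrow> j \<in> pref i (sc p))"
proof -
  define ee where "ee = (\<lambda>m::nat. inverse (real (Suc (Suc m))))"
  have ee0: "0 < ee m" for m by (simp add: ee_def)
  have ee1: "ee m \<le> 1" for m unfolding ee_def by (rule inverse_le_1_iff[THEN iffD2]) simp
  have eemono: "a \<le> b \<Longrightarrow> ee b \<le> ee a" for a b by (simp add: ee_def le_imp_inverse_le)
  have eelim: "ee \<longlonglongrightarrow> 0"
    unfolding ee_def using LIMSEQ_Suc[OF LIMSEQ_inverse_real_of_nat] .
  have "\<forall>m. \<exists>p. p \<in> simp1 n \<and> (\<forall>j<n. Dm (ee m) p j = cc)"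
    using equilibrium[OF ee0] by blast
  then obtain P where P: "\<And>m. P m \<in> simp1 n" and PD: "\<And>m j. j < n \<Longrightarrow> Dm (ee m) (P m) j = cc"
    by metis
  have Pb: "\<bar>P m a\<bar> \<le> 1" if "a \<in> {..<n}" for m a
    using P[of m] simp1_le1[OF P[of m]] that by (auto simp: simp1_def)
  obtain \<phi> Lp where \<phi>: "strict_mono \<phi>" and Lp: "\<And>a. a \<in> {..<n} \<Longrightarrow> (\<lambda>m. P (\<phi> m) a) \<longlonglongrightarrow> Lp a"
    using bw_fin_lim[of "{..<n}" P 1] Pb by blast
  define Y where "Y = (\<lambda>m (ij::nat\<times>nat). xa (ee (\<phi> m)) (P (\<phi> m)) (fst ij) (snd ij))"
  have Yb: "\<bar>Y m a\<bar> \<le> 1" if aK: "a \<in> {..<Suc n} \<times> {..<n}" for m a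
  proof -
    obtain i j where a: "a = (i, j)" "i < Suc n" "j < n" using aK by auto
    show ?thesis using xa_nonneg xa_le1[OF P a(2) ee0 a(3)] by (simp add: Y_def a)
  qed
  obtain \<psi> LX where \<psi>: "strict_mono \<psi>" and LX: "\<And>a. a \<in> {..<Suc n} \<times> {..<n} \<Longrightarrow> (\<lambda>m. Y (\<psi> m) a) \<longlonglongrightarrow> LX a"
    using bw_fin_lim[of "{..<Suc n} \<times> {..<n}" Y 1] Yb by blast
  define \<theta> where "\<theta> = \<phi> \<circ> \<psi>"
  have \<theta>: "strict_mono \<theta>" unfolding \<theta>_def using \<phi> \<psi> by (rule strict_mono_o)
  define pst where "pst = (\<lambda>l. if l < n then Lp l else 0)"
  have Pc: "(\<lambda>m. P (\<theta> m) l) \<longlonglongrightarrow> pst l" for l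
  proof (cases "l < n")
    case True
    have "((\<lambda>m. P (\<phi> m) l) \<circ> \<psi>) \<longlonglongrightarrow> Lp l" using LIMSEQ_subseq_LIMSEQ[OF Lp \<psi>] True by simp
    then show ?thesis using True by (simp add: \<theta>_def pst_def o_def)
  next
    case False
    then have "P (\<theta> m) l = 0" for m using P[of "\<theta> m"] by (simp add: simp1_def)
    then show ?thesis using False by (simp add: pst_def)
  qed
  define X where "X = (\<lambda>i j. if i < Suc n \<and> j < n then LX (i, j) else 0)"
  have Yc: "(\<lambda>m. xa (ee (\<theta> m)) (P (\<theta> m)) i j) \<longlonglongrightarrow> X i j" if "i < Suc n" "j < n" for i j
    using LX[of "(i,j)"] that by (simp add: X_def Y_def \<theta>_def)
  have pst: "pst \<in> simp1 n"
  proof -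
    have nn: "0 \<le> pst l" if "l < n" for l
      by (rule LIMSEQ_le_const[OF Pc]) (use P that in \<open>auto simp: simp1_def\<close>)
    have "(\<lambda>m. \<Sum>l<n. P (\<theta> m) l) \<longlonglongrightarrow> (\<Sum>l<n. pst l)"
      by (intro tendsto_sum Pc)
    moreover have "(\<lambda>m. \<Sum>l<n. P (\<theta> m) l) = (\<lambda>m. 1)" using P by (simp add: simp1_def)
    ultimately have "(\<lambda>m. 1::real) \<longlonglongrightarrow> (\<Sum>l<n. pst l)" by simp
    then have "(\<Sum>l<n. pst l) = 1" by (simp add: LIMSEQ_const_iff)
    then show ?thesis using nn by (simp add: simp1_def pst_def)
  qed
  have Xnn: "0 \<le> X i j" for i j
  proof (cases "i < Suc n \<and> j < n")
    case True
    then show ?thesis using LIMSEQ_le_const[OF Yc] xa_nonneg by blast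
  next
    case False then show ?thesis by (auto simp: X_def)
  qed
  have row: "(\<Sum>j<n. X i j) = 1" if i: "i < Suc n" for i
  proof -
    have "(\<lambda>m. \<Sum>j<n. xa (ee (\<theta> m)) (P (\<theta> m)) i j) \<longlonglongrightarrow> (\<Sum>j<n. X i j)"
      by (intro tendsto_sum Yc i) simp
    moreover have "(\<lambda>m. \<Sum>j<n. xa (ee (\<theta> m)) (P (\<theta> m)) i j) = (\<lambda>m. 1)"
      using xa_row[OF P i ee0] by simp
    ultimately have "(\<lambda>m. 1::real) \<longlonglongrightarrow> (\<Sum>j<n. X i j)" by simp
    then show ?thesis by (simp add: LIMSEQ_const_iff)
  qed
  have col: "(\<Sum>i<Suc n. X i j) = cc" if j: "j < n" for j
  proof -
    have "(\<lambda>m. \<Sum>i<Suc n. xa (ee (\<theta> m)) (P (\<theta> m)) i j) \<longlonglongrightarrow> (\<Sum>i<Suc n. X i j)"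
      by (intro tendsto_sum Yc j) simp
    moreover have "(\<lambda>m. \<Sum>i<Suc n. xa (ee (\<theta> m)) (P (\<theta> m)) i j) = (\<lambda>m. cc)"
      using PD[OF j] by (simp add: Dm_def)
    ultimately have "(\<lambda>m. cc) \<longlonglongrightarrow> (\<Sum>i<Suc n. X i j)" by simp
    then show ?thesis by (simp add: LIMSEQ_const_iff)
  qed
  have pos: "j \<in> pref i (sc pst)" if i: "i < Suc n" and j: "j < n" and X0: "0 < X i j" for i j
  proof -
    have "\<forall>\<^sub>F m in sequentially. 0 < xa (ee (\<theta> m)) (P (\<theta> m)) i j"
      by (rule order_tendstoD(1)[OF Yc[OF i j] X0])
    then obtain N where N: "\<And>m. m \<ge> N \<Longrightarrow> 0 < xa (ee (\<theta> m)) (P (\<theta> m)) i j"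
      by (auto simp: eventually_sequentially)
    have ex: "\<exists>q. q \<in> Cs i j \<and> d1 n (P (\<theta> (m + N))) q < ee (\<theta> (m + N))" for m
    proof -
      have "0 < xa (ee (\<theta> (m + N))) (P (\<theta> (m + N))) i j" using N by simp
      then have "w (ee (\<theta> (m + N))) i j (P (\<theta> (m + N))) \<noteq> 0"
        by (auto simp: xa_def)
      then have "0 < w (ee (\<theta> (m + N))) i j (P (\<theta> (m + N)))"
        using w_nonneg[of "ee (\<theta> (m + N))" i j "P (\<theta> (m + N))"] by linarith
      then have "dC n (Cs i j) (P (\<theta> (m + N))) < ee (\<theta> (m + N))" by (rule w_pos)
      then show ?thesis using dC_small ee1 by blast
    qed
    have ex': "\<forall>m. \<exists>q. q \<in> Cs i j \<and> d1 n (P (\<theta> (m + N))) q < ee (\<theta> (m + N))"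
      using ex by blast
    from choice[OF ex'] obtain Qf where
      Qfd: "\<forall>m. Qf m \<in> Cs i j \<and> d1 n (P (\<theta> (m + N))) (Qf m) < ee (\<theta> (m + N))"
      by blast
    have Qf: "\<And>m. Qf m \<in> Cs i j" and Qd: "\<And>m. d1 n (P (\<theta> (m + N))) (Qf m) < ee (\<theta> (m + N))"
      using Qfd by auto
    have Qs: "Qf m \<in> simp1 n" for m using Qf[of m] by (simp add: Cs_def)
    have Qc: "(\<lambda>m. Qf m l) \<longlonglongrightarrow> pst l" for l
    proof (cases "l < n")
      case True
      have "(\<lambda>m. Qf m l - P (\<theta> (m + N)) l) \<longlonglongrightarrow> 0"
      proof (rule Lim_null_comparison[OF _ eelim])
        show "\<forall>\<^sub>F m in sequentially. norm (Qf m l - P (\<theta> (m + N)) l) \<le> ee m"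
        proof (intro always_eventually allI)
          fix m
          have "m \<le> \<theta> (m + N)" using seq_suble[OF \<theta>, of "m + N"] by simp
          then have "ee (\<theta> (m + N)) \<le> ee m" by (rule eemono)
          moreover have "\<bar>P (\<theta> (m + N)) l - Qf m l\<bar> \<le> d1 n (P (\<theta> (m + N))) (Qf m)"
            by (rule d1_coord[OF True])
          ultimately show "norm (Qf m l - P (\<theta> (m + N)) l) \<le> ee m"
            using Qd[of m] by (simp add: abs_minus_commute)
        qed
      qed
      moreover have "(\<lambda>m. P (\<theta> (m + N)) l) \<longlonglongrightarrow> pst l"
        using LIMSEQ_ignore_initial_segment[OF Pc[of l], of N] by simp
      ultimately have "(\<lambda>m. (Qf m l - P (\<theta> (m + N)) l) + P (\<theta> (m + N)) l) \<longlonglongrightarrow> 0 + pst l"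
        by (rule tendsto_add)
      then show ?thesis by simp
    next
      case False
      then have "Qf m l = 0" for m using Qs[of m] by (simp add: simp1_def)
      then show ?thesis using False by (simp add: pst_def)
    qed
    show ?thesis
    proof (rule closed[OF i])
      show "\<forall>m. rent_division n R (sc (Qf m))" using rd Qs by blast
      show "rent_division n R (sc pst)" by (rule rd[OF pst])
      show "\<forall>l. (\<lambda>m. sc (Qf m) l) \<longlonglongrightarrow> sc pst l"
        unfolding sc_def by (intro allI tendsto_mult tendsto_const Qc)
      show "\<forall>m. j \<in> pref i (sc (Qf m))" using Qf by (simp add: Cs_def)
    qed
  qed
  show ?thesis
    using pst Xnn row col pos by blast
qed

end

lemma hall:
  fixes A :: "'a \<Rightarrow> 'b set"
  assumes "finite I" "\<And>i. i \<in> I \<Longrightarrow> finite (A i)"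
    and "\<And>T. T \<subseteq> I \<Longrightarrow> card T \<le> card (\<Union> (A ` T))"
  shows "\<exists>f. inj_on f I \<and> (\<forall>i\<in>I. f i \<in> A i)"
  using assms
proof (induction "card I" arbitrary: I A rule: less_induct)
  case less
  note fin = less.prems(1) and finA = less.prems(2) and hc = less.prems(3)
  show ?case
  proof (cases "I = {}")
    case True then show ?thesis by simp
  next
    case Ine: False
    show ?thesis
    proof (cases "\<exists>T. T \<noteq> {} \<and> T \<subset> I \<and> card (\<Union> (A ` T)) = card T")
      case True
      then obtain T where T: "T \<noteq> {}" "T \<subset> I" "card (\<Union> (A ` T)) = card T" by blast
      define N where "N = \<Union> (A ` T)"
      have finT: "finite T" using T(2) fin finite_subset by blast
      have finN: "finite N" unfolding N_def using finT finA T(2) by blast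
      have cT: "card T < card I" using T(2) fin by (simp add: psubset_card_mono)
      obtain f1 where f1: "inj_on f1 T" "\<forall>i\<in>T. f1 i \<in> A i"
      proof -
        have "\<exists>f. inj_on f T \<and> (\<forall>i\<in>T. f i \<in> A i)"
          by (rule less.hyps[OF cT finT]) (use finA hc T(2) in auto)
        then show ?thesis using that by blast
      qed
      define I2 where "I2 = I - T"
      define A2 where "A2 = (\<lambda>i. A i - N)"
      have cI2: "card I2 < card I"
      proof -
        have "card I2 = card I - card T" unfolding I2_def
          using T(2) finT by (simp add: card_Diff_subset psubset_imp_subset)
        moreover have "0 < card T" using finT T(1) by (simp add: card_gt_0_iff)
        ultimately show ?thesis using cT by linarith
      qed
      have finI2: "finite I2" unfolding I2_def using fin by simp
      obtain f2 where f2: "inj_on f2 I2" "\<forall>i\<in>I2. f2 i \<in> A2 i"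
      proof -
        have "\<exists>f. inj_on f I2 \<and> (\<forall>i\<in>I2. f i \<in> A2 i)"
        proof (rule less.hyps[OF cI2 finI2])
          fix i assume "i \<in> I2" then show "finite (A2 i)" using finA by (simp add: A2_def I2_def)
        next
          fix T' assume T': "T' \<subseteq> I2"
          have finT': "finite T'" using T' finI2 finite_subset by blast
          have U: "\<Union> (A ` (T \<union> T')) = N \<union> \<Union> (A2 ` T')" by (auto simp: N_def A2_def)
          have finU2: "finite (\<Union> (A2 ` T'))"
            using finT' finA T' by (auto simp: A2_def I2_def)
          have disj: "N \<inter> \<Union> (A2 ` T') = {}" by (auto simp: A2_def)
          have dTT: "T \<inter> T' = {}" using T' by (auto simp: I2_def)
          have "card T + card T' = card (T \<union> T')" using dTT finT finT' by (simp add: card_Un_disjoint)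
          also have "\<dots> \<le> card (\<Union> (A ` (T \<union> T')))" by (rule hc) (use T T' in \<open>auto simp: I2_def\<close>)
          also have "\<dots> = card N + card (\<Union> (A2 ` T'))" unfolding U using finN finU2 disj by (simp add: card_Un_disjoint)
          finally show "card T' \<le> card (\<Union> (A2 ` T'))" using T(3) by (simp add: N_def)
        qed
        then show ?thesis using that by blast
      qed
      define f where "f = (\<lambda>i. if i \<in> T then f1 i else f2 i)"
      have "inj_on f I"
      proof (rule inj_onI)
        fix x y assume x: "x \<in> I" and y: "y \<in> I" and e: "f x = f y"
        consider "x \<in> T" "y \<in> T" | "x \<in> T" "y \<notin> T" | "x \<notin> T" "y \<in> T" | "x \<notin> T" "y \<notin> T" by blast
        then show "x = y"
        proof cases
          case 1 then show ?thesis using e f1(1) by (simp add: f_def inj_on_def)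
        next
          case 2
          then have "f x \<in> N" "f y \<notin> N" using f1 f2 y by (auto simp: f_def N_def A2_def I2_def)
          then show ?thesis using e by simp
        next
          case 3
          then have "f y \<in> N" "f x \<notin> N" using f1 f2 x by (auto simp: f_def N_def A2_def I2_def)
          then show ?thesis using e by simp
        next
          case 4 then show ?thesis using e f2(1) x y by (simp add: f_def inj_on_def I2_def)
        qed
      qed
      moreover have "\<forall>i\<in>I. f i \<in> A i" using f1 f2 by (auto simp: f_def A2_def I2_def)
      ultimately show ?thesis by blast
    next
      case False
      then have strict: "card T < card (\<Union> (A ` T))" if "T \<noteq> {}" "T \<subset> I" for T
      proof -
        have "card T \<le> card (\<Union> (A ` T))" using hc[OF psubset_imp_subset[OF that(2)]] .
        moreover have "card (\<Union> (A ` T)) \<noteq> card T" using False that by blast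
        ultimately show ?thesis by linarith
      qed
      obtain i0 where i0: "i0 \<in> I" using Ine by blast
      have "card {i0} \<le> card (\<Union> (A ` {i0}))" by (rule hc) (use i0 in auto)
      then have "A i0 \<noteq> {}" by auto
      then obtain a where a: "a \<in> A i0" by blast
      define I2 where "I2 = I - {i0}"
      define A2 where "A2 = (\<lambda>i. A i - {a})"
      have cI2: "card I2 < card I" unfolding I2_def using fin i0 by (rule card_Diff1_less)
      have finI2: "finite I2" unfolding I2_def using fin by simp
      obtain f2 where f2: "inj_on f2 I2" "\<forall>i\<in>I2. f2 i \<in> A2 i"
      proof -
        have "\<exists>f. inj_on f I2 \<and> (\<forall>i\<in>I2. f i \<in> A2 i)"
        proof (rule less.hyps[OF cI2 finI2])
          fix i assume "i \<in> I2" then show "finite (A2 i)" using finA by (simp add: A2_def I2_def)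
        next
          fix T' assume T': "T' \<subseteq> I2"
          show "card T' \<le> card (\<Union> (A2 ` T'))"
          proof (cases "T' = {}")
            case True then show ?thesis by simp
          next
            case False
            have sub: "T' \<subset> I" using T' i0 by (auto simp: I2_def)
            have finT': "finite T'" using T' finI2 finite_subset by blast
            have finU: "finite (\<Union> (A ` T'))" using finT' finA sub by auto
            have lt: "card T' < card (\<Union> (A ` T'))" by (rule strict[OF False sub])
            have eq: "\<Union> (A2 ` T') = \<Union> (A ` T') - {a}" by (auto simp: A2_def)
            have "card (\<Union> (A ` T')) - 1 \<le> card (\<Union> (A ` T') - {a})"
              using diff_card_le_card_Diff[of "{a}" "\<Union> (A ` T')"] by simp
            then show ?thesis using lt unfolding eq by linarith
          qed
        qed
        then show ?thesis using that by blast
      qed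
      define f where "f = f2(i0 := a)"
      have "inj_on f I"
      proof -
        have "I = insert i0 I2" using i0 by (auto simp: I2_def)
        moreover have "inj_on f I2" using f2(1) by (simp add: f_def inj_on_def I2_def)
        moreover have "f i0 \<notin> f ` I2" using f2(2) by (auto simp: f_def A2_def I2_def)
        moreover have "I2 - {i0} = I2" by (auto simp: I2_def)
        ultimately show ?thesis by simp
      qed
      moreover have "\<forall>i\<in>I. f i \<in> A i" using f2(2) a by (auto simp: f_def A2_def I2_def)
      ultimately show ?thesis by blast
    qed
  qed
qed

context rh begin

lemma main:
  "\<exists>p. rent_division n R p \<and> (\<forall>r<Suc n. \<exists>\<sigma>. envy_free_assignment pref p ({..<Suc n} - {r}) n \<sigma>)"
proof -
  obtain pst X where pst: "pst \<in> simp1 n" and Xnn: "\<And>i j. 0 \<le> X i j"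
    and row: "\<And>i. i < Suc n \<Longrightarrow> (\<Sum>j<n. X i j) = 1"
    and col: "\<And>j. j < n \<Longrightarrow> (\<Sum>i<Suc n. X i j) = cc"
    and pos: "\<And>i j. i < Suc n \<Longrightarrow> j < n \<Longrightarrow> 0 < X i j \<Longrightarrow> j \<in> pref i (sc pst)"
    using limit_eq by blast
  define P where "P = sc pst"
  have rdP: "rent_division n R P" unfolding P_def by (rule rd[OF pst])
  have prefsub: "pref i P \<subseteq> {..<n}" if "i < Suc n" for i
    using pref_rooms[OF that rdP] by blast
  have X0: "X i j = 0" if i: "i < Suc n" and j: "j < n" and nj: "j \<notin> pref i P" for i j
    using pos[OF i j] nj Xnn[of i j] by (force simp: P_def)
  have "\<exists>\<sigma>. envy_free_assignment pref P ({..<Suc n} - {r}) n \<sigma>" if r: "r < Suc n" for r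
  proof -
    define I where "I = {..<Suc n} - {r}"
    have finI: "finite I" by (simp add: I_def)
    have cI: "card I = n" using r by (simp add: I_def)
    have "\<exists>f. inj_on f I \<and> (\<forall>i\<in>I. f i \<in> pref i P)"
    proof (rule hall[OF finI])
      fix i assume "i \<in> I"
      then show "finite (pref i P)" using prefsub[of i] finite_subset by (auto simp: I_def)
    next
      fix T assume T: "T \<subseteq> I"
      define N where "N = \<Union> ((\<lambda>i. pref i P) ` T)"
      have TS: "T \<subseteq> {..<Suc n}" using T by (auto simp: I_def)
      have finT: "finite T" using T finI finite_subset by blast
      have Nsub: "N \<subseteq> {..<n}" using prefsub TS by (auto simp: N_def)
      have finN: "finite N" using Nsub finite_subset by blast
      have "(\<Sum>i\<in>T. \<Sum>j<n. X i j) = (\<Sum>i\<in>T. 1)"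
        by (rule sum.cong[OF refl]) (use row TS in auto)
      then have "real (card T) = (\<Sum>i\<in>T. \<Sum>j<n. X i j)" by simp
      also have "\<dots> = (\<Sum>i\<in>T. \<Sum>j\<in>N. X i j)"
      proof (rule sum.cong[OF refl])
        fix i assume i: "i \<in> T"
        show "(\<Sum>j<n. X i j) = (\<Sum>j\<in>N. X i j)"
        proof (rule sum.mono_neutral_right[OF _ Nsub])
          show "finite {..<n}" by simp
          show "\<forall>j\<in>{..<n} - N. X i j = 0"
            using X0 i TS by (auto simp: N_def)
        qed
      qed
      also have "\<dots> = (\<Sum>j\<in>N. \<Sum>i\<in>T. X i j)" by (rule sum.swap)
      also have "\<dots> \<le> (\<Sum>j\<in>N. \<Sum>i<Suc n. X i j)"
        by (rule sum_mono, rule sum_mono2) (use TS Xnn in auto)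
      also have "\<dots> = (\<Sum>j\<in>N. cc)"
        by (rule sum.cong[OF refl]) (use col Nsub in auto)
      also have "\<dots> = real (card N) * cc" by simp
      finally have ineq: "real (card T) \<le> real (card N) * cc" .
      show "card T \<le> card (\<Union> ((\<lambda>i. pref i P) ` T))"
      proof (cases "card N < n")
        case True
        have "real (card N) * cc = real (card N) + real (card N) / real n"
          using n1 by (simp add: cc_def field_simps)
        also have "real (card N) / real n < 1" using True n1 by simp
        finally have "real (card T) < real (card N) + 1" using ineq by linarith
        then show ?thesis by (simp add: N_def)
      next
        case False
        have "card T \<le> card I" using finI T by (rule card_mono)
        then show ?thesis using False cI by (simp add: N_def)
      qed
    qed
    then obtain f where f: "inj_on f I" "\<forall>i\<in>I. f i \<in> pref i P" by blast
    have img: "f ` I \<subseteq> {..<n}" using f(2) prefsub by (auto simp: I_def)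
    have "card (f ` I) = n" using card_image[OF f(1)] cI by simp
    then have "f ` I = {..<n}" using img by (intro card_subset_eq) auto
    then have "bij_betw f I {..<n}" using f(1) by (simp add: bij_betw_def)
    then show ?thesis using f(2) by (auto simp: envy_free_assignment_def I_def)
  qed
  then show ?thesis using rdP by blast
qed

end

theorem theorem2p4:
  fixes k :: nat and R :: real
    and pref :: "nat \<Rightarrow> (nat \<Rightarrow> real) \<Rightarrow> nat set"
  assumes k: "2 \<le> k"
    and R: "0 \<le> R"
    and pref_rooms: "\<And>i p. i < k \<Longrightarrow> rent_division (k - 1) R p \<Longrightarrow>
                        pref i p \<noteq> {} \<and> pref i p \<subseteq> {..<k - 1}"
    and free_room: "\<And>i p j. i < k \<Longrightarrow> rent_division (k - 1) R p \<Longrightarrow> j < k - 1 \<Longrightarrow>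
                        p j = 0 \<Longrightarrow> j \<in> pref i p"
    and closed: "\<And>i j ps p. i < k \<Longrightarrow> (\<forall>m. rent_division (k - 1) R (ps m)) \<Longrightarrow>
                        rent_division (k - 1) R p \<Longrightarrow>
                        (\<forall>l. (\<lambda>m. ps m l) \<longlonglongrightarrow> p l) \<Longrightarrow>
                        (\<forall>m. j \<in> pref i (ps m)) \<Longrightarrow> j \<in> pref i p"
  shows "\<exists>p. rent_division (k - 1) R p \<and>
           (\<forall>r<k. \<exists>\<sigma>. envy_free_assignment pref p ({..<k} - {r}) (k - 1) \<sigma>)"
proof -
  define n where "n = k - 1"
  have kn: "k = Suc n" using k by (simp add: n_def)
  have n1: "1 \<le> n" using k by (simp add: n_def)
  have "rh n R pref"
  proof (unfold_locales)
    show "1 \<le> n" by (rule n1)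
    show "0 \<le> R" by (rule R)
    fix i p assume "i < Suc n" "rent_division n R p"
    then show "pref i p \<noteq> {} \<and> pref i p \<subseteq> {..<n}"
      using pref_rooms[of i p] by (simp add: kn)
  next
    fix i p j assume "i < Suc n" "rent_division n R p" "j < n" "p j = 0"
    then show "j \<in> pref i p" using free_room[of i p j] by (simp add: kn)
  next
    fix i j ps p assume "i < Suc n" "\<forall>m. rent_division n R (ps m)" "rent_division n R p"
      "\<forall>l. (\<lambda>m. ps m l) \<longlonglongrightarrow> p l" "\<forall>m. j \<in> pref i (ps m)"
    then show "j \<in> pref i p" using closed[of i ps p j] by (simp add: kn)
  qed
  then have "\<exists>p. rent_division n R p \<and> (\<forall>r<Suc n. \<exists>\<sigma>. envy_free_assignment pref p ({..<Suc n} - {r}) n \<sigma>)"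
    by (rule rh.main)
  then show ?thesis by (simp add: kn)
qed

end
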